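(* Let $\theta \in (0,1)$ and let $X$ be a nonnegative random variable which is not almost surely zero and which is $\theta$-subscalable. Then $\mathbb{E}[X] = \infty$.
   Context: For $\theta \in (0,1)$, a nonnegative random variable $X$ with survival function $\overline{F}(x) = \mathbb{P}(X > x)$ is called $\theta$-subscalable if $\theta \, \overline{F}(x) \leq \overline{F}(x/\theta)$ for all $x \geq 0$. *)

theory Defs
  imports "HOL-Probability.Probability"
begin

definition survival :: "'a measure \<Rightarrow> ('a \<Rightarrow> real) \<Rightarrow> real \<Rightarrow> real" where
  "survival M X x = measure M {\<omega> \<in> space M. X \<omega> > x}"

definition subscalable :: "real \<Rightarrow> 'a measure \<Rightarrow> ('a \<Rightarrow> real) \<Rightarrow> bool" where
  "subscalable \<theta> M X \<longleftrightarrow> (\<forall>x\<ge>0. \<theta> * survival M X x \<le> survival M X (x / \<theta>))"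

end

theory Submission imports Defs begin

lemma telesc:
  fixes x :: "nat \<Rightarrow> real"
  assumes "incseq x"
  shows "(\<Sum>n<N. (x (Suc n) - x n) * (if t > x (Suc n) then 1 else 0)) \<le> max 0 (min t (x N) - x 0)"
proof (induction N)
  case 0 then show ?case by simp
next
  case (Suc N)
  have m: "x N \<le> x (Suc N)" "x 0 \<le> x N" using assms by (auto simp: incseq_def)
  show ?case
  proof (cases "t > x (Suc N)")
    case True
    then show ?thesis using Suc m by (auto simp: max_def min_def split: if_splits)
  next
    case False
    then show ?thesis using Suc m by (auto simp: max_def min_def split: if_splits)
  qed
qed

lemma iter:
  assumes "subscalable \<theta> M X" "0 < \<theta>" "x0 \<ge> 0"
  shows "\<theta>^n * survival M X x0 \<le> survival M X (x0 / \<theta>^n)"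
proof (induction n)
  case 0 then show ?case by simp
next
  case (Suc n)
  have "\<theta>^Suc n * survival M X x0 = \<theta> * (\<theta>^n * survival M X x0)" by simp
  also have "\<dots> \<le> \<theta> * survival M X (x0 / \<theta>^n)" using Suc assms(2) by (simp add: mult_left_mono)
  also have "\<dots> \<le> survival M X ((x0 / \<theta>^n) / \<theta>)" using assms unfolding subscalable_def
    by (metis divide_nonneg_pos zero_less_power)
  finally show ?case by (simp add: field_simps)
qed

theorem lemma5:
  fixes M :: "'a measure" and X :: "'a \<Rightarrow> real" and \<theta> :: real
  assumes "prob_space M"
    and "X \<in> borel_measurable M"
    and "\<forall>\<omega>\<in>space M. X \<omega> \<ge> 0"
    and "\<not> (AE \<omega> in M. X \<omega> = 0)"
    and "0 < \<theta>" and "\<theta> < 1"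
    and "subscalable \<theta> M X"
  shows "(\<integral>\<^sup>+ \<omega>. ennreal (X \<omega>) \<partial>M) = \<infinity>"
proof (rule ccontr)
  interpret P: prob_space M by fact
  assume fin: "(\<integral>\<^sup>+ \<omega>. ennreal (X \<omega>) \<partial>M) \<noteq> \<infinity>"
  have meas: "\<And>c. {\<omega> \<in> space M. X \<omega> > c} \<in> sets M" using assms(2) by measurable
  obtain x0 where x0: "x0 > 0" "survival M X x0 > 0"
  proof (rule ccontr)
    assume "\<not> thesis"
    with that have z: "\<And>n. survival M X (1 / Suc n) = 0"
      by (metis measure_nonneg survival_def of_nat_0_less_iff zero_less_Suc divide_pos_pos zero_less_one order_le_less)
    have "\<And>n. AE \<omega> in M. X \<omega> \<le> 1 / Suc n"
    proof -
      fix n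
      have "measure M {\<omega> \<in> space M. X \<omega> > 1 / Suc n} = 0" using z[of n] by (simp add: survival_def)
      then have "{\<omega> \<in> space M. X \<omega> > 1 / Suc n} \<in> null_sets M"
        using meas by (simp add: P.emeasure_eq_measure null_sets_def)
      then show "AE \<omega> in M. X \<omega> \<le> 1 / Suc n"
        by (rule AE_I') auto
    qed
    then have aen: "AE \<omega> in M. \<forall>n. X \<omega> \<le> 1 / Suc n" by (simp add: AE_all_countable)
    have pw: "X \<omega> = 0" if w: "\<omega> \<in> space M" "\<forall>n. X \<omega> \<le> 1 / Suc n" for \<omega>
    proof (rule ccontr)
      assume "X \<omega> \<noteq> 0"
      then have pos: "X \<omega> > 0" using assms(3) w by force
      then obtain n where "1 / Suc n < X \<omega>" using nat_approx_posE by blast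
      then show False using w(2) by (metis not_less)
    qed
    have "AE \<omega> in M. X \<omega> = 0" using aen AE_space by eventually_elim (use pw in blast)
    then show False using assms(4) by simp
  qed
  define p where "p = survival M X x0"
  define x where "x n = x0 / \<theta>^n" for n
  have inc: "incseq x" unfolding incseq_def x_def
  proof (intro allI impI)
    fix m n :: nat assume "m \<le> n"
    then have "\<theta>^n \<le> \<theta>^m" using assms(5,6) by (simp add: power_decreasing)
    then show "x0 / \<theta>^m \<le> x0 / \<theta>^n" using x0 assms(5) by (simp add: frac_le)
  qed
  have int: "integrable M X"
    using fin assms(2,3) by (intro integrableI_nonneg) (auto simp: less_top)
  have key: "real N * (x0 * (1 - \<theta>) * p) \<le> integral\<^sup>L M X" for N
  proof -
    define f where "f \<omega> = (\<Sum>n<N. (x (Suc n) - x n) * indicator {\<omega> \<in> space M. X \<omega> > x (Suc n)} \<omega>)" for \<omega>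
    have intf: "integrable M f" unfolding f_def
    proof (rule Bochner_Integration.integrable_sum)
      fix n
      show "integrable M (\<lambda>\<omega>. (x (Suc n) - x n) * indicator {\<omega> \<in> space M. X \<omega> > x (Suc n)} \<omega>)"
        by (rule integrable_mult_right, rule integrable_real_indicator[OF meas]) (simp add: P.emeasure_eq_measure)
    qed
    have "integral\<^sup>L M f = (\<Sum>n<N. (x (Suc n) - x n) * survival M X (x (Suc n)))"
      unfolding f_def survival_def
    proof (subst Bochner_Integration.integral_sum)
      fix n
      show "integrable M (\<lambda>\<omega>. (x (Suc n) - x n) * indicator {\<omega> \<in> space M. X \<omega> > x (Suc n)} \<omega>)"
        by (rule integrable_mult_right, rule integrable_real_indicator[OF meas]) (simp add: P.emeasure_eq_measure)
    next
      show "(\<Sum>n<N. integral\<^sup>L M (\<lambda>\<omega>. (x (Suc n) - x n) * indicator {\<omega> \<in> space M. X \<omega> > x (Suc n)} \<omega>)) =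
        (\<Sum>n<N. (x (Suc n) - x n) * measure M {\<omega> \<in> space M. X \<omega> > x (Suc n)})"
        by (intro sum.cong refl) (simp add: meas P.emeasure_eq_measure)
    qed
    also have "\<dots> \<ge> (\<Sum>n<N. x0 * (1 - \<theta>) * p)"
    proof (rule sum_mono)
      fix n
      have "\<theta>^Suc n * p \<le> survival M X (x (Suc n))"
        unfolding p_def x_def by (rule iter) (use assms x0 in auto)
      moreover have "x (Suc n) - x n \<ge> 0" using inc by (simp add: incseq_SucD)
      ultimately have "(x (Suc n) - x n) * (\<theta>^Suc n * p) \<le> (x (Suc n) - x n) * survival M X (x (Suc n))"
        by (rule mult_left_mono)
      moreover have "(x (Suc n) - x n) * (\<theta>^Suc n * p) = x0 * (1 - \<theta>) * p"
        unfolding x_def using assms(5) by (simp add: field_simps)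
      ultimately show "x0 * (1 - \<theta>) * p \<le> (x (Suc n) - x n) * survival M X (x (Suc n))" by metis
    qed
    finally have "real N * (x0 * (1 - \<theta>) * p) \<le> integral\<^sup>L M f" by simp
    also have "integral\<^sup>L M f \<le> integral\<^sup>L M X"
    proof (rule integral_mono[OF intf int])
      fix \<omega> assume w: "\<omega> \<in> space M"
      have "f \<omega> = (\<Sum>n<N. (x (Suc n) - x n) * (if X \<omega> > x (Suc n) then 1 else 0))"
        unfolding f_def using w by (intro sum.cong) (auto simp: indicator_def)
      also have "\<dots> \<le> max 0 (min (X \<omega>) (x N) - x 0)" by (rule telesc[OF inc])
      also have "\<dots> \<le> X \<omega>" using assms(3) w x0 by (auto simp: x_def)
      finally show "f \<omega> \<le> X \<omega>" .
    qed
    finally show ?thesis .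
  qed
  have c: "x0 * (1 - \<theta>) * p > 0" using x0 assms(6) unfolding p_def by simp
  obtain N :: nat where "integral\<^sup>L M X / (x0 * (1 - \<theta>) * p) < N" using reals_Archimedean2 by blast
  then have "integral\<^sup>L M X < N * (x0 * (1 - \<theta>) * p)" using c by (simp add: field_simps)
  with key[of N] show False by simp
qed

end
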